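(* Let $\mathbf{a}$ be a centered symplectic cellular automaton (CSCA) and let $\xi=(\xi_+,\xi_-)\in\mathcal{P}^2$ be a non-zero phase space vector with $\mathbf{a}\xi=u^n\xi$ for some $n\in\mathbb{N}$. Then: (1) $\mathbf{a}\bar\xi=u^{-n}\bar\xi$; (2) $\mathbf{a}$ is uniquely given by $$\mathbf{a}_{11}=\frac{u^n\xi_+\bar\xi_-+u^{-n}\bar\xi_+\xi_-}{\xi\wedge\bar\xi},\quad \mathbf{a}_{12}=\frac{(u^n+u^{-n})\xi_+\bar\xi_+}{\xi\wedge\bar\xi},\quad \mathbf{a}_{21}=\frac{(u^n+u^{-n})\xi_-\bar\xi_-}{\xi\wedge\bar\xi},\quad \mathbf{a}_{22}=\frac{u^{-n}\xi_+\bar\xi_-+u^{n}\bar\xi_+\xi_-}{\xi\wedge\bar\xi};$$ (3) $\mathrm{tr}\,\mathbf{a}=u^{-n}+u^n$; (4) every glider of $\mathbf{a}$ is a multiple (by an element of $\mathcal{P}$) of $$\left(\frac{\mathbf{a}_{12}}{\gcd(u^n+\mathbf{a}_{11},\mathbf{a}_{12})},\ \frac{u^n+\mathbf{a}_{11}}{\gcd(u^n+\mathbf{a}_{11},\mathbf{a}_{12})}\right)\quad\text{or of}\quad \left(\frac{\mathbf{a}_{12}}{\gcd(u^{-n}+\mathbf{a}_{11},\mathbf{a}_{12})},\ \frac{u^{-n}+\mathbf{a}_{11}}{\gcd(u^{-n}+\mathbf{a}_{11},\mathbf{a}_{12})}\right).$$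
   Context: $\mathcal{P}$ denotes the ring of Laurent polynomials in a variable $u$ over the field $\mathbb{Z}_2$ (all arithmetic mod 2). For $p\in\mathcal{P}$, $\bar p$ denotes the involution $p(u)\mapsto p(u^{-1})$; for vectors and matrices it is applied entrywise. $\mathcal{R}\subset\mathcal{P}$ is the subring of palindromes, $\bar p=p$. A centered symplectic cellular automaton (CSCA) is a $2\times 2$ matrix with entries in $\mathcal{R}$ and determinant $1$, acting on column vectors $\xi=(\xi_+,\xi_-)^T\in\mathcal{P}^2$ (phase space vectors, which label tensor products of Pauli matrices on a spin chain). A glider of $\mathbf{a}$ is a non-zero $\xi\in\mathcal{P}^2$ with $\mathbf{a}\xi=u^k\xi$ for some integer $k$. The wedge product is $\xi\wedge\eta=\xi_+\eta_-+\eta_+\xi_-$. *)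

theory Defs
  imports "HOL-Library.Poly_Mapping" "HOL-Library.Z2"
begin

text \<open>Laurent polynomials in u over Z_2: finitely supported maps from exponents (int)
  to coefficients in the field bit = Z_2, with convolution product (group ring Z_2[Z]).\<close>
type_synonym laurent = "int \<Rightarrow>\<^sub>0 bit"

definition upow :: "int \<Rightarrow> laurent" where
  "upow k = Poly_Mapping.single k 1"

text \<open>The involution p(u) \<mapsto> p(u^{-1}).\<close>
lift_definition lbar :: "laurent \<Rightarrow> laurent" is "\<lambda>f i. f (- i)"
proof -
  fix f :: "int \<Rightarrow> bit" assume "finite {i. f i \<noteq> 0}"
  then have "finite (uminus ` {i. f i \<noteq> 0})" by simp
  moreover have "{i. f (- i) \<noteq> 0} = uminus ` {i. f i \<noteq> 0}"
    by (auto intro: image_eqI[where x="- _"])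
  ultimately show "finite {i. f (- i) \<noteq> 0}" by simp
qed

definition palindrome :: "laurent \<Rightarrow> bool" where
  "palindrome p \<longleftrightarrow> lbar p = p"

type_synonym mat2 = "laurent \<times> laurent \<times> laurent \<times> laurent"
type_synonym pvec = "laurent \<times> laurent"

fun mat_app :: "mat2 \<Rightarrow> pvec \<Rightarrow> pvec" where
  "mat_app (a11, a12, a21, a22) (x, y) = (a11 * x + a12 * y, a21 * x + a22 * y)"

fun smul :: "laurent \<Rightarrow> pvec \<Rightarrow> pvec" where
  "smul c (x, y) = (c * x, c * y)"

fun vbar :: "pvec \<Rightarrow> pvec" where
  "vbar (x, y) = (lbar x, lbar y)"

fun wedge :: "pvec \<Rightarrow> pvec \<Rightarrow> laurent" where
  "wedge (xp, xm) (yp, ym) = xp * ym + yp * xm"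

fun det2 :: "mat2 \<Rightarrow> laurent" where
  "det2 (a11, a12, a21, a22) = a11 * a22 - a12 * a21"

fun tr2 :: "mat2 \<Rightarrow> laurent" where
  "tr2 (a11, a12, a21, a22) = a11 + a22"

fun csca :: "mat2 \<Rightarrow> bool" where
  "csca (a11, a12, a21, a22) \<longleftrightarrow>
     palindrome a11 \<and> palindrome a12 \<and> palindrome a21 \<and> palindrome a22 \<and>
     det2 (a11, a12, a21, a22) = 1"

definition glider :: "mat2 \<Rightarrow> pvec \<Rightarrow> bool" where
  "glider a \<xi> \<longleftrightarrow> \<xi> \<noteq> (0, 0) \<and> (\<exists>k::int. mat_app a \<xi> = smul (upow k) \<xi>)"

definition is_gcd :: "laurent \<Rightarrow> laurent \<Rightarrow> laurent \<Rightarrow> bool" where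
  "is_gcd g p q \<longleftrightarrow> g dvd p \<and> g dvd q \<and> (\<forall>d. d dvd p \<and> d dvd q \<longrightarrow> d dvd g)"

end

theory Submission imports Defs "HOL-Computational_Algebra.Polynomial" begin

lemma laurent_induct:
  fixes f :: "'a \<Rightarrow>\<^sub>0 'b::monoid_add"
  assumes "P 0" "\<And>f k c. P f \<Longrightarrow> P (f + Poly_Mapping.single k c)"
  shows "P f"
proof (induct f rule: update_induct)
  case const then show ?case using assms(1) .
next
  case (update f a b)
  have "Poly_Mapping.update a b f = f + Poly_Mapping.single a b"
    using update(1)
    by (intro poly_mapping_eqI) (auto simp: lookup_update lookup_add lookup_single not_in_keys_iff_lookup_eq_zero)
  then show ?case using assms(2) update by simp
qed

lemma lbar_single: "lbar (Poly_Mapping.single k a) = Poly_Mapping.single (-k) a"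
  by (intro poly_mapping_eqI) (auto simp: lbar.rep_eq lookup_single when_def)

lemma lbar_add: "lbar (p + q) = lbar p + lbar q"
  by (intro poly_mapping_eqI) (auto simp: lbar.rep_eq lookup_add)

lemma lbar_zero[simp]: "lbar 0 = 0"
  by (intro poly_mapping_eqI) (auto simp: lbar.rep_eq)

lemma lbar_lbar[simp]: "lbar (lbar p) = p"
  by (intro poly_mapping_eqI) (auto simp: lbar.rep_eq)

lemma lbar_one[simp]: "lbar 1 = 1"
  using lbar_single[of 0 1] by simp

lemma lbar_mult_single: "lbar (Poly_Mapping.single k a * q) = lbar (Poly_Mapping.single k a) * lbar q"
proof (induct q rule: laurent_induct)
  case 1 then show ?case by simp
next
  case (2 f l c)
  then show ?case by (simp add: distrib_left lbar_add lbar_single mult_single)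
qed

lemma lbar_mult: "lbar (p * q) = lbar p * lbar q"
proof (induct p rule: laurent_induct)
  case 1 then show ?case by simp
next
  case (2 f l c)
  then show ?case by (simp add: distrib_right lbar_add lbar_mult_single)
qed

lemma two_laurent: "(2::laurent) = 0"
proof -
  have "(2::laurent) = Poly_Mapping.single 0 (2::bit)" by (simp only: single_numeral)
  also have "(2::bit) = 0" by simp
  finally show ?thesis by simp
qed

lemma char2: "(p::laurent) + p = 0"
  using two_laurent by (metis mult_2 mult_zero_left)

lemma uminus_laurent: "- (p::laurent) = p"
  using char2 by (metis add_eq_0_iff)

lemma upow_mult: "upow a * upow b = upow (a + b)"
  by (simp add: upow_def mult_single)

lemma upow_0[simp]: "upow 0 = 1"
  by (simp add: upow_def)

lemma lbar_upow: "lbar (upow k) = upow (-k)"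
  by (simp add: upow_def lbar_single)

lemma upow_inj: "upow a = upow b \<Longrightarrow> a = b"
  unfolding upow_def
  by (metis lookup_single_eq lookup_single_not_eq one_neq_zero)

lemma upow_nonzero: "upow a \<noteq> 0"
  using upow_mult[of a "-a"] by auto

lemma upow_pow: "upow 1 ^ n = upow (int n)"
  by (induct n) (auto simp: upow_mult add.commute)


definition cst :: "bit \<Rightarrow> laurent" where "cst c = Poly_Mapping.single 0 c"
definition phi :: "bit poly \<Rightarrow> laurent" where "phi P = poly (map_poly cst P) (upow 1)"

lemma cst_0[simp]: "cst 0 = 0" by (simp add: cst_def)
lemma cst_add: "cst (a + b) = cst a + cst b" unfolding cst_def by (rule single_add)
lemma cst_mult: "cst (a * b) = cst a * cst b" by (simp add: cst_def mult_single)

lemma map_cst_add: "map_poly cst (p + q) = map_poly cst p + map_poly cst q"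
  by (rule poly_eqI) (simp only: coeff_map_poly[of cst, OF cst_0] coeff_add cst_add)

lemma map_cst_mult: "map_poly cst (p * q) = map_poly cst p * map_poly cst q"
proof (induct p)
  case 0 then show ?case by simp
next
  case (pCons a p)
  then show ?case
    by (simp add: map_cst_add map_poly_smult[of cst, OF cst_0 cst_mult] map_poly_pCons)
qed

lemma phi_add: "phi (p + q) = phi p + phi q"
  by (simp add: phi_def map_cst_add)
lemma phi_mult: "phi (p * q) = phi p * phi q"
  by (simp add: phi_def map_cst_mult)
lemma phi_const: "phi [:c:] = cst c"
  by (simp add: phi_def map_poly_pCons)
lemma phi_monom1: "phi (monom 1 n) = upow (int n)"
  by (simp add: phi_def map_poly_monom poly_monom upow_pow cst_def)

lemma phi_dvd: "p dvd q \<Longrightarrow> phi p dvd phi q"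
  by (metis dvdE dvdI phi_mult)

lemma upow_nat: "0 \<le> j \<Longrightarrow> upow j = phi (monom 1 (nat j))"
  by (simp add: phi_monom1)

lemma laurent_repr: "\<exists>m P. (p::laurent) = upow m * phi P"
proof (induct p rule: laurent_induct)
  case 1
  then show ?case by (rule exI[of _ 0], rule exI[of _ 0]) (simp add: phi_def)
next
  case (2 f k c)
  then obtain m P where f: "f = upow m * phi P" by blast
  define m0 where "m0 = min m k"
  have s: "Poly_Mapping.single k c = upow k * phi [:c:]"
    by (simp add: phi_const cst_def upow_def mult_single)
  have um: "upow m = upow m0 * phi (monom 1 (nat (m - m0)))"
    using upow_nat[of "m - m0"] upow_mult[of m0 "m - m0"] by (simp add: m0_def)
  have uk: "upow k = upow m0 * phi (monom 1 (nat (k - m0)))"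
    using upow_nat[of "k - m0"] upow_mult[of m0 "k - m0"] by (simp add: m0_def)
  have "f + Poly_Mapping.single k c =
     upow m0 * phi (monom 1 (nat (m - m0)) * P + monom 1 (nat (k - m0)) * [:c:])"
    unfolding f s um uk by (simp only: phi_add phi_mult) (simp add: algebra_simps)
  then show ?case by blast
qed

lemma euclid_bezout:
  fixes a b :: "'a::euclidean_ring"
  shows "\<exists>x y d. a * x + b * y = d \<and> d dvd a \<and> d dvd b"
proof (induct "euclidean_size b" arbitrary: a b rule: less_induct)
  case less
  show ?case
  proof (cases "b = 0")
    case True
    then show ?thesis by (rule_tac x=1 in exI, rule_tac x=0 in exI) auto
  next
    case False
    have "euclidean_size (a mod b) < euclidean_size b" using False by (rule mod_size_less)
    from less[OF this, of b] obtain x y d where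
      h: "b * x + (a mod b) * y = d" "d dvd b" "d dvd (a mod b)" by blast
    have am: "a mod b = a - (a div b) * b" by (simp add: minus_div_mult_eq_mod)
    have "d dvd a" using h(2,3) by (metis div_mult_mod_eq dvd_add dvd_mult)
    moreover have "a * y + b * (x - (a div b) * y) = d" using h(1) unfolding am
      by (simp add: algebra_simps)
    ultimately show ?thesis using h(2) by blast
  qed
qed

lemma laurent_bezout:
  fixes q1 q2 :: laurent
  assumes cop: "\<And>d. d dvd q1 \<Longrightarrow> d dvd q2 \<Longrightarrow> d dvd 1"
  shows "\<exists>x y. q1 * x + q2 * y = 1"
proof -
  obtain m1 A where q1: "q1 = upow m1 * phi A" using laurent_repr by blast
  obtain m2 B where q2: "q2 = upow m2 * phi B" using laurent_repr by blast
  obtain x y d where h: "A * x + B * y = d" "d dvd A" "d dvd B"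
    using euclid_bezout[of A B] by blast
  have "phi d dvd q1" unfolding q1 using phi_dvd[OF h(2)] by simp
  moreover have "phi d dvd q2" unfolding q2 using phi_dvd[OF h(3)] by simp
  ultimately have "phi d dvd 1" using cop by blast
  then obtain w where w: "1 = phi d * w" by (rule dvdE)
  have e: "phi A * phi x + phi B * phi y = phi d" using h(1) by (metis phi_add phi_mult)
  have i1: "upow (-m1) * upow m1 = 1" "upow (-m2) * upow m2 = 1" by (simp_all add: upow_mult)
  have "q1 * (upow (-m1) * phi x * w) + q2 * (upow (-m2) * phi y * w)
      = (upow (-m1) * upow m1) * phi A * phi x * w + (upow (-m2) * upow m2) * phi B * phi y * w"
    unfolding q1 q2 by (simp add: algebra_simps)
  also have "\<dots> = (phi A * phi x + phi B * phi y) * w" unfolding i1 by (simp add: algebra_simps)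
  also have "\<dots> = 1" using e w by simp
  finally show ?thesis by blast
qed


lemma eq_of_sum0: "(x::laurent) + y = 0 \<Longrightarrow> x = y"
  by (metis add_eq_0_iff uminus_laurent)

lemma sum0_of_eq: "(x::laurent) = y \<Longrightarrow> x + y = 0"
  by (simp add: char2)

lemma kernel_lemma:
  fixes c b g q1 q2 e1 e2 :: laurent
  assumes gcd: "is_gcd g c b" and h1: "q1 * g = b" and h2: "q2 * g = c" and gnz: "g \<noteq> 0"
    and eq: "c * e1 + b * e2 = 0"
  shows "\<exists>p. (e1, e2) = smul p (q1, q2)"
proof -
  have cop: "d dvd 1" if "d dvd q1" "d dvd q2" for d
  proof -
    have "d * g dvd b" using that(1) h1 by (metis mult_dvd_mono dvd_refl)
    moreover have "d * g dvd c" using that(2) h2 by (metis mult_dvd_mono dvd_refl)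
    ultimately have "d * g dvd g" using gcd unfolding is_gcd_def by blast
    then obtain k where "g = d * g * k" by (rule dvdE)
    then have "g * 1 = g * (d * k)" by (simp add: algebra_simps)
    then have "1 = d * k" using gnz by simp
    then show ?thesis by (rule dvdI)
  qed
  obtain x y where xy: "q1 * x + q2 * y = 1" using laurent_bezout[OF cop] by blast
  have "g * (q2 * e1 + q1 * e2) = 0" using eq h1 h2 by (simp add: algebra_simps)
  then have "q2 * e1 + q1 * e2 = 0" using gnz by simp
  then have qe: "q2 * e1 = q1 * e2" by (rule eq_of_sum0)
  define p where "p = e1 * x + e2 * y"
  have "e1 = e1 * (q1 * x + q2 * y)" using xy by simp
  also have "\<dots> = q1 * e1 * x + (q2 * e1) * y" by (simp add: algebra_simps)
  also have "\<dots> = p * q1" unfolding qe p_def by (simp add: algebra_simps)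
  finally have 1: "e1 = p * q1" .
  have "e2 = e2 * (q1 * x + q2 * y)" using xy by simp
  also have "\<dots> = (q1 * e2) * x + q2 * e2 * y" by (simp add: algebra_simps)
  also have "\<dots> = p * q2" unfolding qe[symmetric] p_def by (simp add: algebra_simps)
  finally have 2: "e2 = p * q2" .
  show ?thesis using 1 2 by auto
qed

lemma eigen_cases:
  fixes a11 a12 a21 a22 u v l e1 e2 :: laurent
  assumes det: "a11 * a22 + a12 * a21 = 1" and tr: "a11 + a22 = u + v" and uv: "u * v = 1"
    and nz: "(e1, e2) \<noteq> (0, 0)"
    and r1: "a11 * e1 + a12 * e2 = l * e1" and r2: "a21 * e1 + a22 * e2 = l * e2"
  shows "l = u \<or> l = v"
proof -
  define D where "D = (l + u) * (l + v)"
  have D: "D = a11 * a22 + a12 * a21 + l * (a11 + a22) + l * l"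
    unfolding D_def det tr using uv by (simp add: algebra_simps)
  have s1: "a11 * e1 + a12 * e2 + l * e1 = 0" using r1 by (rule sum0_of_eq)
  have s2: "a21 * e1 + a22 * e2 + l * e2 = 0" using r2 by (rule sum0_of_eq)
  have "(a22 + l) * (a11 * e1 + a12 * e2 + l * e1) + a12 * (a21 * e1 + a22 * e2 + l * e2)
      = D * e1 + 2 * (a12 * a22 * e2 + l * a12 * e2)"
    unfolding D by (simp add: algebra_simps)
  then have d1: "D * e1 = 0" using s1 s2 two_laurent by simp
  have "(a11 + l) * (a21 * e1 + a22 * e2 + l * e2) + a21 * (a11 * e1 + a12 * e2 + l * e1)
      = D * e2 + 2 * (a11 * a21 * e1 + l * a21 * e1)"
    unfolding D by (simp add: algebra_simps)
  then have d2: "D * e2 = 0" using s1 s2 two_laurent by simp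
  have "D = 0" using d1 d2 nz by auto
  then have "l + u = 0 \<or> l + v = 0" unfolding D_def by simp
  then show ?thesis using eq_of_sum0 by blast
qed


theorem mainTheorem1:
  fixes a11 a12 a21 a22 xp xm :: laurent and n :: nat
  assumes hcsca: "csca (a11, a12, a21, a22)"
    and hnz: "(xp, xm) \<noteq> (0, 0)"
    and hn: "n \<ge> 1"
    and heig: "mat_app (a11, a12, a21, a22) (xp, xm) = smul (upow (int n)) (xp, xm)"
  shows "mat_app (a11, a12, a21, a22) (vbar (xp, xm)) = smul (upow (- int n)) (vbar (xp, xm))
    \<and> (wedge (xp, xm) (vbar (xp, xm)) \<noteq> 0
         \<and> a11 * wedge (xp, xm) (vbar (xp, xm))
             = upow (int n) * xp * lbar xm + upow (- int n) * lbar xp * xm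
         \<and> a12 * wedge (xp, xm) (vbar (xp, xm))
             = (upow (int n) + upow (- int n)) * xp * lbar xp
         \<and> a21 * wedge (xp, xm) (vbar (xp, xm))
             = (upow (int n) + upow (- int n)) * xm * lbar xm
         \<and> a22 * wedge (xp, xm) (vbar (xp, xm))
             = upow (- int n) * xp * lbar xm + upow (int n) * lbar xp * xm)
    \<and> tr2 (a11, a12, a21, a22) = upow (- int n) + upow (int n)
    \<and> (\<forall>g q1 q2 g' q1' q2'.
           is_gcd g (upow (int n) + a11) a12 \<and> q1 * g = a12 \<and> q2 * g = upow (int n) + a11 \<and>
           is_gcd g' (upow (- int n) + a11) a12 \<and> q1' * g' = a12 \<and> q2' * g' = upow (- int n) + a11
           \<longrightarrow> (\<forall>\<eta>. glider (a11, a12, a21, a22) \<eta> \<longrightarrow>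
                  (\<exists>p. \<eta> = smul p (q1, q2)) \<or> (\<exists>p. \<eta> = smul p (q1', q2'))))"
proof -
  define u where "u = upow (int n)"
  define v where "v = upow (- int n)"
  define bxp where "bxp = lbar xp"
  define bxm where "bxm = lbar xm"
  define W where "W = xp * bxm + bxp * xm"
  have pal: "lbar a11 = a11" "lbar a12 = a12" "lbar a21 = a21" "lbar a22 = a22"
    and det0: "a11 * a22 - a12 * a21 = 1"
    using hcsca by (auto simp: palindrome_def)
  have det: "a11 * a22 + a12 * a21 = 1" using det0 by (metis diff_conv_add_uminus uminus_laurent)
  have uv: "u * v = 1" by (simp add: u_def v_def upow_mult)
  have buv: "lbar u = v" "lbar v = u" by (simp_all add: u_def v_def lbar_upow)
  have unv: "u \<noteq> v" using hn upow_inj unfolding u_def v_def by fastforce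
  have e1: "a11 * xp + a12 * xm = u * xp" and e2: "a21 * xp + a22 * xm = u * xm"
    using heig by (simp_all add: u_def)
  have b1: "a11 * bxp + a12 * bxm = v * bxp"
    using arg_cong[OF e1, of lbar] by (simp add: lbar_add lbar_mult pal buv bxp_def bxm_def)
  have b2: "a21 * bxp + a22 * bxm = v * bxm"
    using arg_cong[OF e2, of lbar] by (simp add: lbar_add lbar_mult pal buv bxp_def bxm_def)
  have part1: "mat_app (a11, a12, a21, a22) (vbar (xp, xm)) = smul v (vbar (xp, xm))"
    using b1 b2 by (simp add: bxp_def bxm_def)
  have "a11 * W + 2 * (a12 * xm * bxm) = (a11 * xp + a12 * xm) * bxm + (a11 * bxp + a12 * bxm) * xm"
    unfolding W_def by (simp add: algebra_simps)
  then have f11: "a11 * W = u * xp * bxm + v * bxp * xm" using e1 b1 two_laurent by (simp add: algebra_simps)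
  have "a12 * W + 2 * (a11 * xp * bxp) = (a11 * xp + a12 * xm) * bxp + (a11 * bxp + a12 * bxm) * xp"
    unfolding W_def by (simp add: algebra_simps)
  then have f12: "a12 * W = (u + v) * xp * bxp" using e1 b1 two_laurent by (simp add: algebra_simps)
  have "a21 * W + 2 * (a22 * xm * bxm) = (a21 * xp + a22 * xm) * bxm + (a21 * bxp + a22 * bxm) * xm"
    unfolding W_def by (simp add: algebra_simps)
  then have f21: "a21 * W = (u + v) * xm * bxm" using e2 b2 two_laurent by (simp add: algebra_simps)
  have "a22 * W + 2 * (a21 * xp * bxp) = (a21 * bxp + a22 * bxm) * xp + (a21 * xp + a22 * xm) * bxp"
    unfolding W_def by (simp add: algebra_simps)
  then have f22: "a22 * W = v * xp * bxm + u * bxp * xm" using e2 b2 two_laurent by (simp add: algebra_simps)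
  have upv: "u + v \<noteq> 0" using unv eq_of_sum0 by blast
  have Wnz: "W \<noteq> 0"
  proof
    assume W0: "W = 0"
    then have "(u + v) * (xp * bxp) = 0" "(u + v) * (xm * bxm) = 0"
      using f12 f21 by (simp_all add: mult.assoc)
    then have "xp * bxp = 0" "xm * bxm = 0" using upv by simp_all
    then have "xp = 0" "xm = 0" unfolding bxp_def bxm_def by (metis lbar_lbar lbar_zero mult_eq_0_iff)+
    then show False using hnz by simp
  qed
  have "(a11 + a22) * W = (u + v) * W" using f11 f22 unfolding W_def by (simp add: algebra_simps)
  then have tr: "a11 + a22 = u + v" using Wnz by simp
  have part4: "(\<exists>p. \<eta> = smul p (q1, q2)) \<or> (\<exists>p. \<eta> = smul p (q1', q2'))"
    if H: "is_gcd g (u + a11) a12" "q1 * g = a12" "q2 * g = u + a11"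
       "is_gcd g' (v + a11) a12" "q1' * g' = a12" "q2' * g' = v + a11"
    and gl: "glider (a11, a12, a21, a22) \<eta>" for g q1 q2 g' q1' q2' \<eta>
  proof -
    obtain e1 e2 where eta: "\<eta> = (e1, e2)" by (cases \<eta>)
    from gl obtain k where nz: "(e1, e2) \<noteq> (0, 0)"
      and ev: "mat_app (a11, a12, a21, a22) (e1, e2) = smul (upow k) (e1, e2)"
      unfolding glider_def eta by blast
    have r1: "a11 * e1 + a12 * e2 = upow k * e1" and r2: "a21 * e1 + a22 * e2 = upow k * e2"
      using ev by simp_all
    have "upow k = u \<or> upow k = v" by (rule eigen_cases[OF det tr uv nz r1 r2])
    then show ?thesis
    proof
      assume l: "upow k = u"
      have gnz: "g \<noteq> 0"
      proof
        assume "g = 0"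
        then have "u + a11 = 0" using H(3) by simp
        then have "u = a11" by (rule eq_of_sum0)
        then have "v = u" using pal buv by metis
        then show False using unv by simp
      qed
      have "(u + a11) * e1 + a12 * e2 = 0"
        using sum0_of_eq[OF r1] unfolding l by (simp add: algebra_simps)
      then show ?thesis using kernel_lemma[OF H(1-3) gnz] eta by auto
    next
      assume l: "upow k = v"
      have gnz: "g' \<noteq> 0"
      proof
        assume "g' = 0"
        then have "v + a11 = 0" using H(6) by simp
        then have "v = a11" by (rule eq_of_sum0)
        then have "u = v" using pal buv by metis
        then show False using unv by simp
      qed
      have "(v + a11) * e1 + a12 * e2 = 0"
        using sum0_of_eq[OF r1] unfolding l by (simp add: algebra_simps)
      then show ?thesis using kernel_lemma[OF H(4-6) gnz] eta by auto
    qed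
  qed
  have P4: "\<forall>g q1 q2 g' q1' q2'.
           is_gcd g (u + a11) a12 \<and> q1 * g = a12 \<and> q2 * g = u + a11 \<and>
           is_gcd g' (v + a11) a12 \<and> q1' * g' = a12 \<and> q2' * g' = v + a11
           \<longrightarrow> (\<forall>\<eta>. glider (a11, a12, a21, a22) \<eta> \<longrightarrow>
                  (\<exists>p. \<eta> = smul p (q1, q2)) \<or> (\<exists>p. \<eta> = smul p (q1', q2')))"
    using part4 by blast
  have w: "wedge (xp, xm) (vbar (xp, xm)) = W" by (simp add: W_def bxp_def bxm_def)
  have vb: "vbar (xp, xm) = (bxp, bxm)" by (simp add: bxp_def bxm_def)
  show ?thesis
    unfolding u_def[symmetric] v_def[symmetric] w
    apply (intro conjI)
    subgoal using part1 .
    subgoal using Wnz .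
    subgoal using f11 by (simp add: bxp_def bxm_def)
    subgoal using f12 by (simp add: bxp_def bxm_def)
    subgoal using f21 by (simp add: bxp_def bxm_def)
    subgoal using f22 by (simp add: bxp_def bxm_def)
    subgoal using tr by (simp add: add.commute)
    subgoal using P4 .
    done
qed

end
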